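(* Let $T$ be a plane labelled bipartite tree with $n$ white and $m$ black vertices, where $n+m$ is even. Then the value $i(T)\in\{0,1\}$ does not depend on which white vertex is chosen as the root vertex (nor on the root edge at it). Consequently the parity (even/odd) of $T$ is well defined.
   Context: A plane labelled bipartite tree with $n$ white and $m$ black vertices is defined as follows. It is a finite tree embedded in the oriented plane, considered up to orientation-preserving homeomorphism. Its vertices are colored white and black so that adjacent vertices have different colors. The white vertices carry the distinct labels $v_1,\dots,v_n$ and the black vertices the distinct labels $u_1,\dots,u_m$. String $c(T)$: choose a white vertex $v_i$ (the root vertex) and an edge $e$ incident to it (the root edge). Walk counterclockwise around $T$, i.e. perform the contour walk around the tree keeping the tree on the left, starting at $v_i$ and first traversing $e$, until returning to $v_i$ after all edges have been traversed twice. Whenever a vertex is met for the first time, write its label. Whenever a vertex is met for the last time, write a closing bracket ")". For example, for the path $v_1-u_1-v_2-u_2$ rooted at $v_1$, $c(T)=v_1u_1v_2u_2))))$. The string contains $n+m$ labels and $n+m$ brackets. Invariant: let - $a$ be the number of pairs of white labels $v_k,v_l$ with $v_k$ occurring before $v_l$ in $c(T)$ and $k>l$; - $b$ be the analogous number of inversions among black labels $u_k$; - $c$ be the number of pairs (black label $u$, white label $v$) with $u$ occurring before $v$ in $c(T)$; - $d$ be the number of pairs (closing bracket, label) with the bracket occurring before the label in $c(T)$; - $e_0=|n-m|/2$. Then $i(T)\in\{0,1\}$ is defined by $i(T)\equiv a+b+c+\tfrac{d+e_0}{2}\pmod 2$. The tree is called even if $i(T)=0$ and odd if $i(T)=1$.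 *)

theory Defs
  imports Main
begin

text \<open>Vertices of a labelled bipartite tree: white vertex W i carries label v_i,
black vertex B j carries label u_j (labels are 1-based).\<close>
datatype vtx = W nat | B nat

datatype tok = Lab vtx | Close

text \<open>The tree is given by its edge set E: (i,j) \<in> E means v_i is joined to u_j.\<close>
definition vertices :: "nat \<Rightarrow> nat \<Rightarrow> vtx set" where
  "vertices n m = W ` {1..n} \<union> B ` {1..m}"

definition adj :: "(nat \<times> nat) set \<Rightarrow> (vtx \<times> vtx) set" where
  "adj E = {(W i, B j) | i j. (i, j) \<in> E} \<union> {(B j, W i) | i j. (i, j) \<in> E}"

definition nbrs :: "(nat \<times> nat) set \<Rightarrow> vtx \<Rightarrow> vtx set" where
  "nbrs E x = {y. (x, y) \<in> adj E}"

definition is_tree :: "nat \<Rightarrow> nat \<Rightarrow> (nat \<times> nat) set \<Rightarrow> bool" where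
  "is_tree n m E \<longleftrightarrow> E \<subseteq> {1..n} \<times> {1..m} \<and> card E + 1 = n + m
     \<and> (\<forall>x\<in>vertices n m. \<forall>y\<in>vertices n m. (x, y) \<in> (adj E)\<^sup>*)"

text \<open>Plane structure (rotation system): rot x is the counterclockwise successor
permutation of the neighbours of x; it must be a single cycle on nbrs E x.
A plane labelled tree up to orientation preserving homeomorphism is exactly a
labelled tree together with such a rotation system.\<close>
definition is_rotation :: "(nat \<times> nat) set \<Rightarrow> (vtx \<Rightarrow> vtx \<Rightarrow> vtx) \<Rightarrow> bool" where
  "is_rotation E rot \<longleftrightarrow> (\<forall>x. bij_betw (rot x) (nbrs E x) (nbrs E x)
     \<and> (\<forall>y\<in>nbrs E x. \<forall>z\<in>nbrs E x. \<exists>k. (rot x ^^ k) y = z))"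

definition plane_tree :: "nat \<Rightarrow> nat \<Rightarrow> (nat \<times> nat) set \<Rightarrow> (vtx \<Rightarrow> vtx \<Rightarrow> vtx) \<Rightarrow> bool" where
  "plane_tree n m E rot \<longleftrightarrow> is_tree n m E \<and> is_rotation E rot"

text \<open>Contour walk: after traversing the edge (u,w) (a dart), the walk continues
from w along the edge to rot w u.\<close>
definition step :: "(vtx \<Rightarrow> vtx \<Rightarrow> vtx) \<Rightarrow> vtx \<times> vtx \<Rightarrow> vtx \<times> vtx" where
  "step rot d = (snd d, rot (snd d) (fst d))"

definition occ :: "(vtx \<Rightarrow> vtx \<Rightarrow> vtx) \<Rightarrow> vtx \<Rightarrow> vtx \<Rightarrow> nat \<Rightarrow> vtx" where
  "occ rot r e t = fst ((step rot ^^ t) (r, e))"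

definition cstring :: "nat \<Rightarrow> nat \<Rightarrow> (vtx \<Rightarrow> vtx \<Rightarrow> vtx) \<Rightarrow> vtx \<Rightarrow> vtx \<Rightarrow> tok list" where
  "cstring n m rot r e =
    (let L = 2 * (n + m - 1); x = occ rot r e in
     concat (map (\<lambda>t. (if (\<forall>s<t. x s \<noteq> x t) then [Lab (x t)] else [])
                    @ (if (\<forall>s\<in>{t<..L}. x s \<noteq> x t) then [Close] else [])) [0..<L+1]))"

definition count_pairs :: "tok list \<Rightarrow> (tok \<Rightarrow> tok \<Rightarrow> bool) \<Rightarrow> nat" where
  "count_pairs cs P = card {(p, q). p < q \<and> q < length cs \<and> P (cs ! p) (cs ! q)}"

definition inv_a :: "tok list \<Rightarrow> nat" where
  "inv_a cs = count_pairs cs (\<lambda>s t. \<exists>k l. s = Lab (W k) \<and> t = Lab (W l) \<and> k > l)"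

definition inv_b :: "tok list \<Rightarrow> nat" where
  "inv_b cs = count_pairs cs (\<lambda>s t. \<exists>k l. s = Lab (B k) \<and> t = Lab (B l) \<and> k > l)"

definition inv_c :: "tok list \<Rightarrow> nat" where
  "inv_c cs = count_pairs cs (\<lambda>s t. \<exists>k l. s = Lab (B k) \<and> t = Lab (W l))"

definition inv_d :: "tok list \<Rightarrow> nat" where
  "inv_d cs = count_pairs cs (\<lambda>s t. s = Close \<and> (\<exists>y. t = Lab y))"

definition iT :: "nat \<Rightarrow> nat \<Rightarrow> (vtx \<Rightarrow> vtx \<Rightarrow> vtx) \<Rightarrow> vtx \<Rightarrow> vtx \<Rightarrow> nat" where
  "iT n m rot r e =
    (let cs = cstring n m rot r e;
         e0 = (if n \<ge> m then n - m else m - n) div 2 in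
     (inv_a cs + inv_b cs + inv_c cs + (inv_d cs + e0) div 2) mod 2)"

end

theory Submission
  imports Defs
begin

lemma count_pairs_Nil[simp]: "count_pairs [] P = 0"
  by (simp add: count_pairs_def)

lemma count_pairs_Cons: "count_pairs (c # cs) P = length (filter (P c) cs) + count_pairs cs P"
proof -
  let ?S = "{(p, q). p < q \<and> q < length (c#cs) \<and> P ((c#cs) ! p) ((c#cs) ! q)}"
  let ?A = "{i. i < length cs \<and> P c (cs ! i)}"
  let ?B = "{(p, q). p < q \<and> q < length cs \<and> P (cs ! p) (cs ! q)}"
  have eq: "?S = (\<lambda>i. (0, Suc i)) ` ?A \<union> (\<lambda>(p,q). (Suc p, Suc q)) ` ?B"
  proof (rule set_eqI, clarify)
    fix p q
    show "((p, q) \<in> ?S) = ((p, q) \<in> (\<lambda>i. (0, Suc i)) ` ?A \<union> (\<lambda>(p,q). (Suc p, Suc q)) ` ?B)"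
    proof (cases p)
      case 0 then show ?thesis by (cases q) auto
    next
      case (Suc p') then show ?thesis by (cases q) (auto simp: image_iff)
    qed
  qed
  have fA: "finite ?A" by simp
  have fB: "finite ?B" by (rule finite_subset[of _ "{..<length cs} \<times> {..<length cs}"]) auto
  have dj: "(\<lambda>i. (0::nat, Suc i)) ` ?A \<inter> (\<lambda>(p,q). (Suc p, Suc q)) ` ?B = {}" by auto
  have "card ?S = card ((\<lambda>i. (0::nat, Suc i)) ` ?A) + card ((\<lambda>(p,q). (Suc p, Suc q)) ` ?B)"
    unfolding eq by (rule card_Un_disjoint[OF finite_imageI[OF fA] finite_imageI[OF fB] dj])
  also have "\<dots> = card ?A + card ?B"
    by (subst card_image, simp add: inj_on_def, subst card_image) (auto simp: inj_on_def)
  finally show ?thesis unfolding count_pairs_def by (simp add: length_filter_conv_card)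
qed

definition XP :: "(tok \<Rightarrow> tok \<Rightarrow> bool) \<Rightarrow> tok list \<Rightarrow> tok list \<Rightarrow> nat" where
  "XP P xs ys = (\<Sum>x\<leftarrow>xs. length (filter (P x) ys))"

lemma XP_simps[simp]: "XP P [] ys = 0" "XP P (x#xs) ys = length (filter (P x) ys) + XP P xs ys"
  "XP P (xs @ zs) ys = XP P xs ys + XP P zs ys" "XP P xs (ys @ zs) = XP P xs ys + XP P xs zs"
  "XP P xs [] = 0" "XP P xs (y # ys) = length (filter (\<lambda>x. P x y) xs) + XP P xs ys"
  by (induct xs) (auto simp: XP_def)

lemma count_pairs_append: "count_pairs (xs @ ys) P = count_pairs xs P + count_pairs ys P + XP P xs ys"
  by (induct xs) (auto simp: count_pairs_Cons)

lemma cp_shift: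
  "count_pairs (A0 @ v # Bs @ [c, c]) P + XP P [v] A0 + XP P [c] Bs
   = count_pairs (v # A0 @ c # Bs @ [c]) P + XP P A0 [v] + XP P Bs [c]"
  by (simp add: count_pairs_append count_pairs_Cons)

definition nl :: "tok list \<Rightarrow> nat" where "nl xs = length (filter (\<lambda>t. t \<noteq> Close) xs)"
lemma isLab_eq: "(\<exists>y. t = Lab y) = (t \<noteq> Close)" by (cases t) auto
definition nc :: "tok list \<Rightarrow> nat" where "nc xs = length (filter (\<lambda>t. t = Close) xs)"

definition PA :: "tok \<Rightarrow> tok \<Rightarrow> bool" where "PA = (\<lambda>s t. \<exists>k l. s = Lab (W k) \<and> t = Lab (W l) \<and> k > l)"
definition PB :: "tok \<Rightarrow> tok \<Rightarrow> bool" where "PB = (\<lambda>s t. \<exists>k l. s = Lab (B k) \<and> t = Lab (B l) \<and> k > l)"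
definition PC :: "tok \<Rightarrow> tok \<Rightarrow> bool" where "PC = (\<lambda>s t. \<exists>k l. s = Lab (B k) \<and> t = Lab (W l))"
lemma inv_abc_P: "inv_a cs = count_pairs cs PA" "inv_b cs = count_pairs cs PB" "inv_c cs = count_pairs cs PC"
  unfolding inv_a_def inv_b_def inv_c_def PA_def PB_def PC_def by rule+

lemma abc_one: "a \<noteq> Lab v \<Longrightarrow>
  (if PA a (Lab v) then 1 else 0) + (if PA (Lab v) a then 1 else 0)
  + (if PB a (Lab v) then 1 else 0) + (if PB (Lab v) a then 1 else 0)
  + (if PC a (Lab v) then 1 else 0) + (if PC (Lab v) a then 1 else 0) = (if a \<noteq> Close then 1 else (0::nat))"
  unfolding PA_def PB_def PC_def
  apply (cases a)
  subgoal for y by (cases v; cases y) auto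
  by simp

lemma abc_X: "Lab v \<notin> set A \<Longrightarrow>
  XP PA A [Lab v] + XP PA [Lab v] A + XP PB A [Lab v] + XP PB [Lab v] A
  + XP PC A [Lab v] + XP PC [Lab v] A = nl A"
proof (induct A)
  case Nil then show ?case by (simp add: nl_def)
next
  case (Cons a A)
  then have h: "a \<noteq> Lab v" "Lab v \<notin> set A" by auto
  have e: "\<And>P. XP P (a#A) [Lab v] = (if P a (Lab v) then 1 else 0) + XP P A [Lab v]"
     "\<And>P. XP P [Lab v] (a#A) = (if P (Lab v) a then 1 else 0) + XP P [Lab v] A"
    by simp_all
  have "nl (a#A) = (if a \<noteq> Close then 1 else 0) + nl A" by (simp add: nl_def)
  then show ?case unfolding e using abc_one[OF h(1)] Cons(1)[OF h(2)] by linarith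
qed

lemma d_X1: "XP (\<lambda>s t. s = Close \<and> (\<exists>y. t = Lab y)) A [Lab v] = nc A"
  by (induct A) (auto simp: nc_def)
lemma d_X2: "XP (\<lambda>s t. s = Close \<and> (\<exists>y. t = Lab y)) [Close] A = nl A"
  by (induct A) (auto simp: nl_def, metis tok.exhaust)

lemma Q_shift:
  assumes S: "S = Lab v # A0 @ Close # Bs @ [Close]"
    and S': "S' = A0 @ Lab v # Bs @ [Close, Close]"
    and nv: "Lab v \<notin> set A0" and cnt: "nl A0 = nc A0 + 1" and N: "1 + nl A0 + nl Bs = N"
    and ev: "even N"
  shows "(inv_a S' + inv_b S' + inv_c S' + (inv_d S' + e0) div 2) mod 2
       = (inv_a S + inv_b S + inv_c S + (inv_d S + e0) div 2 + N div 2) mod 2"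
proof -
  note cs = cp_shift[of A0 "Lab v" Bs Close]
  have a: "inv_a S' + XP PA [Lab v] A0 = inv_a S + XP PA A0 [Lab v]"
    using cs[of PA] unfolding S S' inv_abc_P by (simp add: PA_def)
  have b: "inv_b S' + XP PB [Lab v] A0 = inv_b S + XP PB A0 [Lab v]"
    using cs[of PB] unfolding S S' inv_abc_P by (simp add: PB_def)
  have c: "inv_c S' + XP PC [Lab v] A0 = inv_c S + XP PC A0 [Lab v]"
    using cs[of PC] unfolding S S' inv_abc_P by (simp add: PC_def)
  have d: "inv_d S' + nl Bs = inv_d S + nc A0"
    using cs[of "\<lambda>s t. s = Close \<and> (\<exists>y. t = Lab y)"]
    unfolding S S' inv_d_def by (simp add: d_X1 d_X2 nl_def nc_def isLab_eq)
  note x = abc_X[OF nv]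
  define XA where "XA = XP PA A0 [Lab v] + XP PB A0 [Lab v] + XP PC A0 [Lab v]"
  define Xr where "Xr = XP PA [Lab v] A0 + XP PB [Lab v] A0 + XP PC [Lab v] A0"
  have x': "XA + Xr = nl A0" using x unfolding XA_def Xr_def by linarith
  have abc: "inv_a S' + inv_b S' + inv_c S' + Xr = inv_a S + inv_b S + inv_c S + XA"
    using a b c unfolding XA_def Xr_def by linarith
  have d2: "inv_d S' + e0 + N = inv_d S + e0 + 2 * nl A0" using d cnt N by linarith
  obtain k where k: "N = 2 * k" using ev by blast
  have d3: "(inv_d S' + e0) div 2 + N div 2 = (inv_d S + e0) div 2 + nl A0"
  proof -
    have "(inv_d S' + e0 + N) div 2 = (inv_d S + e0 + 2 * nl A0) div 2" using d2 by simp
    then show ?thesis unfolding k by simp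
  qed
  have fin: "inv_a S' + inv_b S' + inv_c S' + (inv_d S' + e0) div 2 + N div 2
     = inv_a S + inv_b S + inv_c S + (inv_d S + e0) div 2 + 2 * XA"
    using abc d3 x' by linarith
  have gen: "\<And>y h z x::nat. y + h = z + 2 * x \<Longrightarrow> y mod 2 = (z + h) mod 2" by presburger
  show ?thesis by (rule gen[OF fin])
qed


definition G :: "(nat \<Rightarrow> vtx) \<Rightarrow> nat \<Rightarrow> nat \<Rightarrow> tok list" where
  "G x L t = (if (\<forall>s<t. x s \<noteq> x t) then [Lab (x t)] else [])
                    @ (if (\<forall>s\<in>{t<..L}. x s \<noteq> x t) then [Close] else [])"

definition tokS :: "(nat \<Rightarrow> vtx) \<Rightarrow> nat \<Rightarrow> tok list" where
  "tokS x L = concat (map (G x L) [0..<L+1])"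

lemma cstring_tokS: "cstring n m rot r e = tokS (occ rot r e) (2 * (n + m - 1))"
  unfolding cstring_def tokS_def G_def Let_def by simp

lemma cm_split: "a \<le> b \<Longrightarrow> b \<le> c \<Longrightarrow>
  concat (map f [a..<c]) = concat (map f [a..<b]) @ concat (map f [b..<c])"
proof -
  assume "a \<le> b" "b \<le> c"
  then obtain k where "c = b + k" by (metis le_add_diff_inverse)
  then show ?thesis using upt_add_eq_append[OF \<open>a \<le> b\<close>, of k] by simp
qed

lemma cm_single: "concat (map f [a..<Suc a]) = f a" by simp

lemma cm_shift: "(\<And>t. a \<le> t \<Longrightarrow> t < b \<Longrightarrow> f t = g (Suc t)) \<Longrightarrow>
  concat (map f [a..<b]) = concat (map g [Suc a..<Suc b])"
proof -
  assume h: "\<And>t. a \<le> t \<Longrightarrow> t < b \<Longrightarrow> f t = g (Suc t)"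
  have "map g [Suc a..<Suc b] = map g (map Suc [a..<b])" by (simp add: map_Suc_upt)
  also have "\<dots> = map f [a..<b]" using h by auto
  finally show ?thesis by simp
qed

lemma nl_append[simp]: "nl (xs @ ys) = nl xs + nl ys" and nc_append[simp]: "nc (xs @ ys) = nc xs + nc ys"
  by (simp_all add: nl_def nc_def)
lemma nl_simps[simp]: "nl [] = 0" "nl (Lab v # xs) = Suc (nl xs)" "nl (Close # xs) = nl xs"
  and nc_simps[simp]: "nc [] = 0" "nc (Lab v # xs) = nc xs" "nc (Close # xs) = Suc (nc xs)"
  by (simp_all add: nl_def nc_def)

lemma nl_concat: "nl (concat (map f xs)) = (\<Sum>t\<leftarrow>xs. nl (f t))"
  by (induct xs) auto
lemma nc_concat: "nc (concat (map f xs)) = (\<Sum>t\<leftarrow>xs. nc (f t))"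
  by (induct xs) auto

lemma nl_G: "nl (G x L t) = (if (\<forall>s<t. x s \<noteq> x t) then 1 else 0)"
  unfolding G_def nl_def by (cases "\<forall>s<t. x s \<noteq> x t"; cases "\<forall>s\<in>{t<..L}. x s \<noteq> x t") simp_all
lemma nc_G: "nc (G x L t) = (if (\<forall>s\<in>{t<..L}. x s \<noteq> x t) then 1 else 0)"
  unfolding G_def nc_def by (cases "\<forall>s<t. x s \<noteq> x t"; cases "\<forall>s\<in>{t<..L}. x s \<noteq> x t") simp_all

lemma sum_list_ind_upt: "(\<Sum>t\<leftarrow>[a..<b]. (if P t then 1 else 0::nat)) = card {t\<in>{a..<b}. P t}"
proof -
  have "(\<Sum>t\<leftarrow>[a..<b]. (if P t then 1 else 0::nat)) = (\<Sum>t\<in>{a..<b}. (if P t then 1 else 0::nat))"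
    by (simp add: sum_list_distinct_conv_sum_set)
  also have "\<dots> = card {t\<in>{a..<b}. P t}"
    by (simp add: sum.If_cases Int_def conj_commute)
  finally show ?thesis .
qed

lemma card_first:
  fixes x :: "nat \<Rightarrow> 'b" and L :: nat
  assumes I: "I \<subseteq> {0..L}" and cl: "\<And>t s. t \<in> I \<Longrightarrow> s \<le> L \<Longrightarrow> x s = x t \<Longrightarrow> s \<in> I"
  shows "card {t\<in>I. \<forall>s<t. x s \<noteq> x t} = card (x ` I)"
proof -
  have "bij_betw x {t\<in>I. \<forall>s<t. x s \<noteq> x t} (x ` I)"
  proof (rule bij_betw_imageI)
    show "inj_on x {t\<in>I. \<forall>s<t. x s \<noteq> x t}"
      by (rule inj_onI) (metis (mono_tags, lifting) mem_Collect_eq nat_neq_iff)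
    show "x ` {t\<in>I. \<forall>s<t. x s \<noteq> x t} = x ` I"
    proof
      show "x ` I \<subseteq> x ` {t\<in>I. \<forall>s<t. x s \<noteq> x t}"
      proof
        fix v assume "v \<in> x ` I"
        then obtain t where t: "t \<in> I" "v = x t" by auto
        define t0 where "t0 = (LEAST s. x s = x t)"
        have a: "x t0 = x t" unfolding t0_def by (rule LeastI) rule
        have b: "t0 \<le> t" unfolding t0_def by (rule Least_le) rule
        have c: "\<forall>s<t0. x s \<noteq> x t0"
        proof (intro allI impI)
          fix s assume "s < t0"
          then have "\<not> x s = x t" unfolding t0_def by (rule not_less_Least)
          then show "x s \<noteq> x t0" using a by simp
        qed
        have "t0 \<in> I" using cl[OF t(1) _ a] b t(1) I by auto
        then have "t0 \<in> {t\<in>I. \<forall>s<t. x s \<noteq> x t}" using c by blast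
        then show "v \<in> x ` {t\<in>I. \<forall>s<t. x s \<noteq> x t}" using a t by (intro image_eqI[where x=t0]) auto
      qed
    qed auto
  qed
  then show ?thesis by (rule bij_betw_same_card)
qed

lemma card_last:
  fixes x :: "nat \<Rightarrow> 'b" and L :: nat
  assumes I: "I \<subseteq> {0..L}" and cl: "\<And>t s. t \<in> I \<Longrightarrow> s \<le> L \<Longrightarrow> x s = x t \<Longrightarrow> s \<in> I"
  shows "card {t\<in>I. \<forall>s\<in>{t<..L}. x s \<noteq> x t} = card (x ` I)"
proof -
  have "bij_betw x {t\<in>I. \<forall>s\<in>{t<..L}. x s \<noteq> x t} (x ` I)"
  proof (rule bij_betw_imageI)
    show "inj_on x {t\<in>I. \<forall>s\<in>{t<..L}. x s \<noteq> x t}"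
    proof (rule inj_onI)
      fix a b assume "a \<in> {t\<in>I. \<forall>s\<in>{t<..L}. x s \<noteq> x t}" "b \<in> {t\<in>I. \<forall>s\<in>{t<..L}. x s \<noteq> x t}" "x a = x b"
      then have "a \<le> L" "b \<le> L" "\<forall>s\<in>{a<..L}. x s \<noteq> x a" "\<forall>s\<in>{b<..L}. x s \<noteq> x b" using I by auto
      note h = this \<open>x a = x b\<close>
      show "a = b"
      proof (cases a b rule: linorder_cases)
        case less then show ?thesis using h by auto
      next
        case greater then show ?thesis using h by auto
      qed
    qed
    show "x ` {t\<in>I. \<forall>s\<in>{t<..L}. x s \<noteq> x t} = x ` I"
    proof
      show "x ` I \<subseteq> x ` {t\<in>I. \<forall>s\<in>{t<..L}. x s \<noteq> x t}"
      proof
        fix v assume "v \<in> x ` I"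
        then obtain t where t: "t \<in> I" "v = x t" by auto
        define M where "M = {s. s \<le> L \<and> x s = x t}"
        have fM: "finite M" unfolding M_def by simp
        have tM: "t \<in> M" using t I unfolding M_def by auto
        define t0 where "t0 = Max M"
        have t0M: "t0 \<in> M" unfolding t0_def using fM tM by (intro Max_in) auto
        have b: "t \<le> t0" unfolding t0_def using fM tM by simp
        have c: "\<forall>s\<in>{t0<..L}. x s \<noteq> x t0"
        proof (intro ballI notI)
          fix s assume s: "s \<in> {t0<..L}" "x s = x t0"
          then have "s \<in> M" using t0M unfolding M_def by auto
          then have "s \<le> t0" unfolding t0_def using fM by simp
          then show False using s by simp
        qed
        have "t0 \<in> I" using cl[OF t(1)] t0M unfolding M_def by auto
        then have "t0 \<in> {t\<in>I. \<forall>s\<in>{t<..L}. x s \<noteq> x t}" using c by blast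
        then show "v \<in> x ` {t\<in>I. \<forall>s\<in>{t<..L}. x s \<noteq> x t}" using t0M t unfolding M_def by (intro image_eqI[where x=t0]) auto
      qed
    qed auto
  qed
  then show ?thesis by (rule bij_betw_same_card)
qed


lemma G_val: "(\<forall>s<t. x s \<noteq> x t) = fa \<Longrightarrow> (\<forall>s\<in>{t<..L}. x s \<noteq> x t) = fb \<Longrightarrow>
  G x L t = (if fa then [Lab (x t)] else []) @ (if fb then [Close] else [])"
  unfolding G_def by simp

lemma G_cong: "(\<forall>s<t. x s \<noteq> x t) = (\<forall>s<t'. y s \<noteq> y t') \<Longrightarrow>
   (\<forall>s\<in>{t<..L}. x s \<noteq> x t) = (\<forall>s\<in>{t'<..L'}. y s \<noteq> y t') \<Longrightarrow> x t = y t' \<Longrightarrow>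
  G x L t = G y L' t'"
  unfolding G_def by simp

lemma first_shift: "(\<forall>s<t. x (Suc s) \<noteq> v) = (\<forall>s. 0 < s \<and> s < Suc t \<longrightarrow> x s \<noteq> v)"
  by (metis Suc_less_eq gr0_conv_Suc)
lemma first_shift0:
  assumes "v \<noteq> x 0" shows "(\<forall>s<t. x (Suc s) \<noteq> v) = (\<forall>s<Suc t. x s \<noteq> v)"
proof (unfold first_shift, intro iffI allI impI)
  fix s assume a: "\<forall>s. 0 < s \<and> s < Suc t \<longrightarrow> x s \<noteq> v" "s < Suc t"
  show "x s \<noteq> v"
  proof (cases "s = 0")
    case True then show ?thesis using assms by auto
  next
    case False then show ?thesis using a by auto
  qed
qed auto

lemma last_shift: "(\<forall>s\<in>{t<..L}. x (Suc s) \<noteq> v) = (\<forall>s. Suc t < s \<and> s \<le> Suc L \<longrightarrow> x s \<noteq> v)"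
  by (auto simp: Suc_less_eq2) (metis Suc_le_mono Suc_less_eq gr0_conv_Suc less_trans_Suc zero_less_Suc)

lemma decomp:
  fixes x :: "nat \<Rightarrow> vtx" and L p :: nat
  defines "\<tau> \<equiv> Suc (Suc p)"
  assumes H1: "x L = x 0" "x (Suc L) = x 1"
    and H2: "\<tau> \<le> L" "x \<tau> = x 0" "\<And>t. 0 < t \<Longrightarrow> t < \<tau> \<Longrightarrow> x t \<noteq> x 0"
    and H3: "x (Suc p) = x 1"
    and H4: "\<And>s t. 1 \<le> s \<Longrightarrow> s < \<tau> \<Longrightarrow> \<tau> \<le> t \<Longrightarrow> t \<le> L \<Longrightarrow> x s \<noteq> x t"
  shows "\<exists>A0 Bs. tokS x L = Lab (x 0) # A0 @ Close # Bs @ [Close]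
     \<and> tokS (\<lambda>t. x (Suc t)) L = A0 @ Lab (x 0) # Bs @ [Close, Close]
     \<and> Lab (x 0) \<notin> set A0 \<and> nl A0 = nc A0 + 1 \<and> 1 + nl A0 + nl Bs = card (x ` {0..<Suc L})"
proof -
  define y where "y = (\<lambda>t. x (Suc t))"
  have x01: "x 1 \<noteq> x 0" using H2(3)[of 1] unfolding \<tau>_def by simp
  have F0: "G x L 0 = [Lab (x 0)]"
    by (rule trans[OF G_val[where fa=True and fb=False]]) (use H1 H2(1) \<tau>_def in auto)
  have F1: "G y L t = G x L (Suc t)" if t: "t < p" for t
  proof (rule G_cong)
    show "(\<forall>s<t. y s \<noteq> y t) = (\<forall>s<Suc t. x s \<noteq> x (Suc t))"
      unfolding y_def using H2(3)[of "Suc t"] t \<tau>_def by (intro first_shift0) auto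
    have "x (Suc L) = x (Suc p)" using H1 H3 by simp
    then show "(\<forall>s\<in>{t<..L}. y s \<noteq> y t) = (\<forall>s\<in>{Suc t<..L}. x s \<noteq> x (Suc t))"
      unfolding y_def last_shift using t H2(1) \<tau>_def
      by (auto simp: le_Suc_eq)
  qed (simp add: y_def)
  define lab where "lab = (if (\<forall>s<Suc p. x s \<noteq> x (Suc p)) then [Lab (x (Suc p))] else [])"
  have lastSp: "\<forall>s\<in>{Suc p<..L}. x s \<noteq> x (Suc p)"
  proof
    fix s assume "s \<in> {Suc p<..L}"
    then have "\<tau> \<le> s" "s \<le> L" by (auto simp: \<tau>_def)
    then show "x s \<noteq> x (Suc p)" using H4[of "Suc p" s] \<tau>_def by auto
  qed
  have F2x: "G x L (Suc p) = lab @ [Close]"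
    unfolding lab_def
    by (rule trans[OF G_val[where fa="\<forall>s<Suc p. x s \<noteq> x (Suc p)" and fb=True]]) (use lastSp in auto)
  have F2y: "G y L p = lab"
  proof -
    have "(\<forall>s<p. y s \<noteq> y p) = (\<forall>s<Suc p. x s \<noteq> x (Suc p))"
      unfolding y_def using H2(3)[of "Suc p"] \<tau>_def by (intro first_shift0) auto
    moreover have "(\<forall>s\<in>{p<..L}. y s \<noteq> y p) = False"
      using H1 H3 H2(1) \<tau>_def unfolding y_def by (auto intro!: bexI[of _ L])
    ultimately show ?thesis unfolding lab_def
      by (subst G_val[where t=p and x=y and L=L and fa="\<forall>s<Suc p. x s \<noteq> x (Suc p)" and fb=False]) (auto simp: y_def)
  qed
  have FLx: "G x L L = [Close]"
    by (rule trans[OF G_val[where fa=False and fb=True]]) (use H1 H2(1) \<tau>_def in \<open>auto intro!: exI[of _ 0]\<close>)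
  have FLy: "G y L L = [Close]"
    by (rule trans[OF G_val[where fa=False and fb=True]]) (use H1 H2(1) y_def \<tau>_def in \<open>auto intro!: exI[of _ 0]\<close>)
  define A0 where "A0 = concat (map (G x L) [1..<Suc p]) @ lab"
  have yA0: "concat (map (G y L) [0..<p]) = concat (map (G x L) [1..<Suc p])"
    using cm_shift[of 0 p "G y L" "G x L"] F1 by simp
  have A0C: "A0 @ [Close] = concat (map (G x L) [1..<\<tau>])"
    unfolding A0_def \<tau>_def using cm_split[of 1 "Suc p" "Suc (Suc p)" "G x L"] F2x by simp
  have I1: "{1..<\<tau>} \<subseteq> {0..L}" using H2(1) by auto
  have cl1: "s \<in> {1..<\<tau>}" if "t \<in> {1..<\<tau>}" "s \<le> L" "x s = x t" for t s
  proof -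
    have "s \<noteq> 0"
    proof
      assume "s = 0"
      moreover have "x t \<noteq> x 0" using that H2(3)[of t] by auto
      ultimately show False using that by simp
    qed
    moreover have "\<not> \<tau> \<le> s" using that H4[of t s] by auto
    ultimately show ?thesis by auto
  qed
  have nlA: "nl (A0 @ [Close]) = card (x ` {1..<\<tau>})"
    unfolding A0C nl_concat nl_G sum_list_ind_upt by (rule card_first[OF I1 cl1])
  have ncA: "nc (A0 @ [Close]) = card (x ` {1..<\<tau>})"
    unfolding A0C nc_concat nc_G sum_list_ind_upt by (rule card_last[OF I1 cl1])
  have cnt: "nl A0 = nc A0 + 1" using nlA ncA by simp
  have labG: "v = x t" if "Lab v \<in> set (G x L t)" for v t
    using that unfolding G_def by (auto split: if_splits)
  have notin: "Lab (x 0) \<notin> set A0"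
  proof
    assume "Lab (x 0) \<in> set A0"
    then have "Lab (x 0) \<in> set (concat (map (G x L) [1..<\<tau>]))" using A0C[symmetric] by simp
    then obtain t where t: "t \<in> {1..<\<tau>}" "Lab (x 0) \<in> set (G x L t)" by auto
    have "x 0 = x t" by (rule labG[OF t(2)])
    moreover have "x t \<noteq> x 0" using H2(3)[of t] t(1) by auto
    ultimately show False by simp
  qed
  have total: "nl (tokS x L) = card (x ` {0..<Suc L})"
    unfolding tokS_def nl_concat nl_G sum_list_ind_upt
    by (simp only: Suc_eq_plus1, rule card_first[of _ L]) auto
  show ?thesis
  proof (cases "\<tau> < L")
    case True
    define Bs where "Bs = concat (map (G x L) [Suc \<tau>..<L])"
    have F3: "G x L \<tau> = []"
      by (rule trans[OF G_val[where fa=False and fb=False]]) (use H1 H2 True \<tau>_def in \<open>auto intro!: exI[of _ 0] bexI[of _ L]\<close>)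
    have F4: "G y L (Suc p) = [Lab (x 0)]"
    proof (rule trans[OF G_val[where fa=True and fb=False]])
      show "(\<forall>s<Suc p. y s \<noteq> y (Suc p)) = True"
        unfolding y_def using H2(2,3) \<tau>_def by auto
      show "(\<forall>s\<in>{Suc p<..L}. y s \<noteq> y (Suc p)) = False"
        unfolding y_def using H1 H2(2) True \<tau>_def by (auto intro!: bexI[of _ "L - 1"])
    qed (use H2(2) \<tau>_def y_def in simp)
    have F5: "G y L t = G x L (Suc t)" if "\<tau> \<le> t" "t < L - 1" for t
    proof (rule G_cong)
      show "(\<forall>s<t. y s \<noteq> y t) = (\<forall>s<Suc t. x s \<noteq> x (Suc t))"
      proof
        assume a: "\<forall>s<t. y s \<noteq> y t"
        have "x (Suc (Suc p)) = x 0" using H2(2) \<tau>_def by simp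
        then have "x 0 \<noteq> x (Suc t)" using a that \<tau>_def unfolding y_def
          by (metis Suc_le_lessD)
        then show "\<forall>s<Suc t. x s \<noteq> x (Suc t)" using a unfolding y_def
          by (metis less_Suc_eq_0_disj not_less_eq)
      qed (auto simp: y_def)
      have "x (Suc L) \<noteq> x (Suc t)" using H4[of 1 "Suc t"] H1 that \<tau>_def by auto
      then show "(\<forall>s\<in>{t<..L}. y s \<noteq> y t) = (\<forall>s\<in>{Suc t<..L}. x s \<noteq> x (Suc t))"
        unfolding y_def last_shift using that by (auto simp: le_Suc_eq)
    qed (simp add: y_def)
    have F6: "G y L (L - 1) = [Close]"
    proof (rule trans[OF G_val[where fa=False and fb=True]])
      have "x (Suc (Suc p)) = x (Suc (L - 1))" using H1 H2(2) True \<tau>_def by simp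
      then show "(\<forall>s<L - 1. y s \<noteq> y (L - 1)) = False"
        unfolding y_def using True \<tau>_def by (auto intro!: exI[of _ "Suc p"])
      have "{L - 1<..L} = {L}" using True by auto
      then show "(\<forall>s\<in>{L - 1<..L}. y s \<noteq> y (L - 1)) = True"
        unfolding y_def using H1 x01 True by simp
    qed simp
    have tS: "tokS x L = concat (map (G x L) [0..<Suc L])" by (simp add: tokS_def)
    have tSy: "tokS y L = concat (map (G y L) [0..<Suc L])" by (simp add: tokS_def)
    have e1: "concat (map (G x L) [0..<Suc L]) = concat (map (G x L) [0..<1]) @ concat (map (G x L) [1..<Suc L])"
      by (rule cm_split) auto
    have e2: "concat (map (G x L) [1..<Suc L]) = concat (map (G x L) [1..<\<tau>]) @ concat (map (G x L) [\<tau>..<Suc L])"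
      by (rule cm_split) (use True \<tau>_def in auto)
    have e3: "concat (map (G x L) [\<tau>..<Suc L]) = concat (map (G x L) [\<tau>..<Suc \<tau>]) @ concat (map (G x L) [Suc \<tau>..<Suc L])"
      by (rule cm_split) (use True in auto)
    have e4: "concat (map (G x L) [Suc \<tau>..<Suc L]) = concat (map (G x L) [Suc \<tau>..<L]) @ concat (map (G x L) [L..<Suc L])"
      by (rule cm_split) (use True in auto)
    have s0: "concat (map (G x L) [0..<1]) = [Lab (x 0)]" using F0 by simp
    have s1: "concat (map (G x L) [\<tau>..<Suc \<tau>]) = []" using F3 by simp
    have s2: "concat (map (G x L) [L..<Suc L]) = [Close]" using FLx by simp
    have Sx: "tokS x L = Lab (x 0) # A0 @ Close # Bs @ [Close]"
      unfolding tS e1 e2 e3 e4 s0 s1 s2 A0C[symmetric] Bs_def[symmetric] by simp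
    have f1: "concat (map (G y L) [0..<Suc L]) = concat (map (G y L) [0..<p]) @ concat (map (G y L) [p..<Suc L])"
      by (rule cm_split) (use True \<tau>_def in auto)
    have f2: "concat (map (G y L) [p..<Suc L]) = concat (map (G y L) [p..<Suc p]) @ concat (map (G y L) [Suc p..<Suc L])"
      by (rule cm_split) (use True \<tau>_def in auto)
    have f3: "concat (map (G y L) [Suc p..<Suc L]) = concat (map (G y L) [Suc p..<\<tau>]) @ concat (map (G y L) [\<tau>..<Suc L])"
      by (rule cm_split) (use True \<tau>_def in auto)
    have f4: "concat (map (G y L) [\<tau>..<Suc L]) = concat (map (G y L) [\<tau>..<L - 1]) @ concat (map (G y L) [L - 1..<Suc L])"
      by (rule cm_split) (use True \<tau>_def in auto)
    have f5: "concat (map (G y L) [L - 1..<Suc L]) = concat (map (G y L) [L - 1..<L]) @ concat (map (G y L) [L..<Suc L])"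
      by (rule cm_split) (use True \<tau>_def in auto)
    have t1: "concat (map (G y L) [p..<Suc p]) = lab" using F2y by simp
    have t2: "concat (map (G y L) [Suc p..<\<tau>]) = [Lab (x 0)]" using F4 \<tau>_def by simp
    have t3: "concat (map (G y L) [\<tau>..<L - 1]) = Bs"
      unfolding Bs_def using True by (subst cm_shift[where g="G x L"]) (auto simp: F5 Suc_diff_1)
    have t4: "concat (map (G y L) [L - 1..<L]) = [Close]" using F6 True
      by (metis Suc_diff_1 cm_single less_nat_zero_code not_gr_zero)
    have t5: "concat (map (G y L) [L..<Suc L]) = [Close]" using FLy by simp
    have Sy: "tokS y L = A0 @ Lab (x 0) # Bs @ [Close, Close]"
      unfolding tSy f1 f2 f3 f4 f5 t1 t2 t3 t4 t5 yA0 A0_def by simp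
    show ?thesis
      by (rule exI[of _ A0], rule exI[of _ Bs]) (use Sx Sy[unfolded y_def] notin cnt total in simp)
  next
    case False
    then have L: "L = \<tau>" using H2(1) by simp
    have F7: "G y L (Suc p) = [Lab (x 0), Close]"
    proof (rule trans[OF G_val[where fa=True and fb=True]])
      show "(\<forall>s<Suc p. y s \<noteq> y (Suc p)) = True"
        unfolding y_def using H2(2,3) \<tau>_def by auto
      have "{Suc p<..L} = {L}" using L \<tau>_def by auto
      then show "(\<forall>s\<in>{Suc p<..L}. y s \<noteq> y (Suc p)) = True"
        unfolding y_def using H1 x01 L \<tau>_def by simp
    qed (use H2(2) \<tau>_def y_def in simp)
    have tS: "tokS x L = concat (map (G x L) [0..<Suc L])" by (simp add: tokS_def)
    have tSy: "tokS y L = concat (map (G y L) [0..<Suc L])" by (simp add: tokS_def)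
    have e1: "concat (map (G x L) [0..<Suc L]) = concat (map (G x L) [0..<1]) @ concat (map (G x L) [1..<Suc L])"
      by (rule cm_split) auto
    have e2: "concat (map (G x L) [1..<Suc L]) = concat (map (G x L) [1..<\<tau>]) @ concat (map (G x L) [L..<Suc L])"
      using cm_split[of 1 \<tau> "Suc L" "G x L"] L \<tau>_def by simp
    have s0: "concat (map (G x L) [0..<1]) = [Lab (x 0)]" using F0 by simp
    have s2: "concat (map (G x L) [L..<Suc L]) = [Close]" using FLx by simp
    have Sx: "tokS x L = Lab (x 0) # A0 @ Close # [] @ [Close]"
      unfolding tS e1 e2 s0 s2 A0C[symmetric] by simp
    have f1: "concat (map (G y L) [0..<Suc L]) = concat (map (G y L) [0..<p]) @ concat (map (G y L) [p..<Suc L])"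
      by (rule cm_split) (use L \<tau>_def in auto)
    have f2: "concat (map (G y L) [p..<Suc L]) = concat (map (G y L) [p..<Suc p]) @ concat (map (G y L) [Suc p..<Suc L])"
      by (rule cm_split) (use L \<tau>_def in auto)
    have f3: "concat (map (G y L) [Suc p..<Suc L]) = concat (map (G y L) [Suc p..<L]) @ concat (map (G y L) [L..<Suc L])"
      by (rule cm_split) (use L \<tau>_def in auto)
    have t1: "concat (map (G y L) [p..<Suc p]) = lab" using F2y by simp
    have t2: "concat (map (G y L) [Suc p..<L]) = [Lab (x 0), Close]" using F7 L \<tau>_def by simp
    have t5: "concat (map (G y L) [L..<Suc L]) = [Close]" using FLy by simp
    have Sy: "tokS y L = A0 @ Lab (x 0) # [] @ [Close, Close]"
      unfolding tSy f1 f2 f3 t1 t2 t5 yA0 A0_def by simp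
    show ?thesis
      by (rule exI[of _ A0], rule exI[of _ "[]"]) (use Sx Sy[unfolded y_def] notin cnt total in simp)
  qed
qed


fun ed :: "vtx \<times> vtx \<Rightarrow> nat \<times> nat" where
  "ed (W i, B j) = (i, j)" | "ed (B j, W i) = (i, j)" | "ed _ = (0, 0)"

lemma adj_iff: "(u, v) \<in> adj F \<longleftrightarrow> (\<exists>i j. (i, j) \<in> F \<and> ((u = W i \<and> v = B j) \<or> (u = B j \<and> v = W i)))"
  unfolding adj_def by auto

lemma adj_sym: "(u, v) \<in> adj F \<Longrightarrow> (v, u) \<in> adj F"
  unfolding adj_iff by blast

lemma adj_ed: "(u, v) \<in> adj F \<Longrightarrow> ed (u, v) \<in> F \<and>
   ((u = W (fst (ed (u,v))) \<and> v = B (snd (ed (u,v)))) \<or> (u = B (snd (ed (u,v))) \<and> v = W (fst (ed (u,v)))))"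
  unfolding adj_iff by auto

lemma adj_mono: "F \<subseteq> F' \<Longrightarrow> adj F \<subseteq> adj F'"
  unfolding adj_def by blast

lemma adj_sub_V: "F \<subseteq> {1..n} \<times> {1..m} \<Longrightarrow> adj F \<subseteq> vertices n m \<times> vertices n m"
  unfolding adj_def vertices_def by auto

lemma rtrancl_sub_V: "(u, v) \<in> R\<^sup>* \<Longrightarrow> R \<subseteq> V \<times> V \<Longrightarrow> u \<in> V \<Longrightarrow> v \<in> V"
  by (induct rule: rtrancl_induct) auto

lemma card_vertices: "card (vertices n m) = n + m"
proof -
  have "card (W ` {1..n} \<union> B ` {1..m}) = card (W ` {1..n}) + card (B ` {1..m})"
    by (rule card_Un_disjoint) auto
  also have "\<dots> = n + m" by (simp add: card_image inj_on_def)
  finally show ?thesis unfolding vertices_def .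
qed

lemma finite_vertices: "finite (vertices n m)" unfolding vertices_def by simp

lemma card_adj: assumes "finite F" shows "card (adj F) = 2 * card F"
proof -
  have e: "adj F = (\<lambda>(i,j). (W i, B j)) ` F \<union> (\<lambda>(i,j). (B j, W i)) ` F"
    unfolding adj_def by auto
  have "card (adj F) = card ((\<lambda>(i,j). (W i, B j)) ` F) + card ((\<lambda>(i,j). (B j, W i)) ` F)"
    unfolding e by (rule card_Un_disjoint) (use assms in auto)
  also have "\<dots> = card F + card F"
    by (subst card_image, force simp: inj_on_def, subst card_image) (auto simp: inj_on_def)
  finally show ?thesis by simp
qed

lemma conn_edges:
  assumes F: "F \<subseteq> {1..n} \<times> {1..m}" and v0: "v0 \<in> vertices n m"
    and conn: "\<And>v. v \<in> vertices n m \<Longrightarrow> (v0, v) \<in> (adj F)\<^sup>*"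
  shows "card (vertices n m) \<le> card F + 1"
proof -
  let ?V = "vertices n m" and ?R = "adj F"
  define dist where "dist v = (LEAST k. (v0, v) \<in> ?R ^^ k)" for v
  have dist_in: "(v0, v) \<in> ?R ^^ dist v" if "v \<in> ?V" for v
  proof -
    have "(v0, v) \<in> ?R\<^sup>*" by (rule conn[OF that])
    then obtain k where "(v0, v) \<in> ?R ^^ k" using rtrancl_power by blast
    then show ?thesis unfolding dist_def by (rule LeastI)
  qed
  have dist_le: "dist v \<le> k" if "(v0, v) \<in> ?R ^^ k" for v k
    unfolding dist_def using that by (rule Least_le)
  have par: "\<exists>u. (u, v) \<in> ?R \<and> Suc (dist u) = dist v" if v: "v \<in> ?V" "v \<noteq> v0" for v
  proof (cases "dist v")
    case 0
    then show ?thesis using dist_in[OF v(1)] v(2) by simp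
  next
    case (Suc j)
    then have "(v0, v) \<in> ?R ^^ j O ?R" using dist_in[OF v(1)] by simp
    then obtain u where u: "(v0, u) \<in> ?R ^^ j" "(u, v) \<in> ?R" by blast
    have "dist u \<le> j" using dist_le[OF u(1)] .
    moreover have "\<not> dist u < j"
    proof
      assume lt: "dist u < j"
      have uV: "u \<in> ?V" using u(2) adj_sub_V[OF F] by auto
      have "(v0, v) \<in> ?R ^^ Suc (dist u)" using dist_in[OF uV] u(2) by auto
      then have "dist v \<le> Suc (dist u)" by (rule dist_le)
      then show False using lt Suc by simp
    qed
    ultimately show ?thesis using u(2) Suc by (intro exI[of _ u]) auto
  qed
  define pr where "pr v = (SOME u. (u, v) \<in> ?R \<and> Suc (dist u) = dist v)" for v
  have pr: "(pr v, v) \<in> ?R \<and> Suc (dist (pr v)) = dist v" if "v \<in> ?V" "v \<noteq> v0" for v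
    unfolding pr_def by (rule someI_ex) (rule par[OF that])
  define g where "g v = ed (pr v, v)" for v
  have "inj_on g (?V - {v0})"
  proof (rule inj_onI)
    fix v v' assume v: "v \<in> ?V - {v0}" and v': "v' \<in> ?V - {v0}" and eq: "g v = g v'"
    have p1: "(pr v, v) \<in> ?R" "Suc (dist (pr v)) = dist v" using pr v by auto
    have p2: "(pr v', v') \<in> ?R" "Suc (dist (pr v')) = dist v'" using pr v' by auto
    note a1 = adj_ed[OF p1(1)] and a2 = adj_ed[OF p2(1)]
    show "v = v'"
    proof (rule ccontr)
      assume ne: "v \<noteq> v'"
      define i where "i = fst (g v)"
      define j where "j = snd (g v)"
      have h1: "(pr v = W i \<and> v = B j) \<or> (pr v = B j \<and> v = W i)"
        using a1 unfolding i_def j_def g_def by blast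
      have h2: "(pr v' = W i \<and> v' = B j) \<or> (pr v' = B j \<and> v' = W i)"
        using a2 eq unfolding i_def j_def g_def by metis
      have e: "pr v = v' \<and> pr v' = v" using h1 h2 ne by auto
      have e1: "pr v = v'" using e by (rule conjunct1)
      have e2: "pr v' = v" using e by (rule conjunct2)
      have "Suc (dist v') = dist v" using p1(2) unfolding e1 .
      moreover have "Suc (dist v) = dist v'" using p2(2) unfolding e2 .
      ultimately show False by simp
    qed
  qed
  moreover have "g ` (?V - {v0}) \<subseteq> F" using pr adj_ed unfolding g_def by blast
  moreover have "finite F" using F by (rule finite_subset) simp
  ultimately have "card (?V - {v0}) \<le> card F" by (metis card_inj_on_le)
  moreover have "card (?V - {v0}) = card ?V - 1" using v0 finite_vertices by simp
  moreover have "0 < card ?V" using v0 finite_vertices[of n m] by (auto simp: card_gt_0_iff)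
  ultimately show ?thesis by simp
qed

lemma adj_remove: "adj (F - {(i, j)}) = adj F - {(W i, B j), (B j, W i)}"
  unfolding adj_def by auto

lemma bridge0:
  assumes T: "is_tree n m E" and ij: "(i, j) \<in> E"
  shows "(W i, B j) \<notin> (adj (E - {(i, j)}))\<^sup>*"
proof
  assume c: "(W i, B j) \<in> (adj (E - {(i, j)}))\<^sup>*"
  let ?F = "E - {(i, j)}" and ?V = "vertices n m"
  have Esub: "E \<subseteq> {1..n} \<times> {1..m}" and cE: "card E + 1 = n + m"
    and conn: "\<forall>x\<in>?V. \<forall>y\<in>?V. (x, y) \<in> (adj E)\<^sup>*" using T unfolding is_tree_def by auto
  have fE: "finite E" using Esub by (rule finite_subset) simp
  have symF: "sym (adj ?F)" by (auto simp: sym_def intro: adj_sym)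
  have c': "(B j, W i) \<in> (adj ?F)\<^sup>*" using c sym_rtrancl[OF symF] by (auto simp: sym_def)
  have sub: "adj E \<subseteq> (adj ?F)\<^sup>*"
  proof
    fix p assume "p \<in> adj E"
    then show "p \<in> (adj ?F)\<^sup>*" using c c' unfolding adj_remove by (cases "p \<in> {(W i, B j), (B j, W i)}") auto
  qed
  have sub2: "(adj E)\<^sup>* \<subseteq> (adj ?F)\<^sup>*" using rtrancl_subset_rtrancl[OF sub] by simp
  have i: "i \<in> {1..n}" using Esub ij by auto
  have v0: "W i \<in> ?V" using i unfolding vertices_def by auto
  have "card ?V \<le> card ?F + 1"
    by (rule conn_edges[OF _ v0]) (use Esub conn sub2 v0 in auto)
  moreover have "card ?F = card E - 1" using ij fE by simp
  moreover have "0 < card E" using ij fE by (auto simp: card_gt_0_iff)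
  ultimately show False using cE card_vertices by simp
qed

definition Gm :: "(nat \<times> nat) set \<Rightarrow> vtx \<Rightarrow> vtx \<Rightarrow> (vtx \<times> vtx) set" where
  "Gm E x y = adj E - {(x, y), (y, x)}"

lemma Gm_sym: "(u, v) \<in> Gm E x y \<Longrightarrow> (v, u) \<in> Gm E x y"
  unfolding Gm_def using adj_sym by blast

lemma bridge:
  assumes T: "is_tree n m E" and xy: "(x, y) \<in> adj E"
  shows "(y, x) \<notin> (Gm E x y)\<^sup>*"
proof -
  obtain i j where ij: "(i, j) \<in> E" "(x = W i \<and> y = B j) \<or> (x = B j \<and> y = W i)"
    using xy unfolding adj_iff by blast
  have b: "(W i, B j) \<notin> (Gm E (W i) (B j))\<^sup>*" using bridge0[OF T ij(1)] unfolding adj_remove Gm_def .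
  have symG: "sym (Gm E (W i) (B j))" by (auto simp: sym_def intro: Gm_sym)
  have b': "(B j, W i) \<notin> (Gm E (W i) (B j))\<^sup>*" using b sym_rtrancl[OF symG] by (auto simp: sym_def)
  have "Gm E (B j) (W i) = Gm E (W i) (B j)" unfolding Gm_def by auto
  then show ?thesis using ij(2) b b' by auto
qed


lemma fpa: "(f ^^ a) ((f ^^ b) x) = (f ^^ (a + b)) x" by (simp add: funpow_add)

locale pt =
  fixes n m :: nat and E :: "(nat \<times> nat) set" and rot :: "vtx \<Rightarrow> vtx \<Rightarrow> vtx"
  assumes PT: "plane_tree n m E rot"
begin

lemma T: "is_tree n m E" using PT unfolding plane_tree_def by simp
lemma Rot: "is_rotation E rot" using PT unfolding plane_tree_def by simp
lemma Esub: "E \<subseteq> {1..n} \<times> {1..m}" using T unfolding is_tree_def by simp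
lemma conn: "x \<in> vertices n m \<Longrightarrow> y \<in> vertices n m \<Longrightarrow> (x, y) \<in> (adj E)\<^sup>*"
  using T unfolding is_tree_def by simp
lemma DV: "(x, y) \<in> adj E \<Longrightarrow> x \<in> vertices n m \<and> y \<in> vertices n m"
  using adj_sub_V[OF Esub] by auto
lemma finD: "finite (adj E)"
  by (rule finite_subset[OF adj_sub_V[OF Esub]]) (simp add: finite_vertices)

lemma nbrs_iff: "z \<in> nbrs E y \<longleftrightarrow> (y, z) \<in> adj E" unfolding nbrs_def by simp

lemma rot_D: "(x, y) \<in> adj E \<Longrightarrow> (y, rot y x) \<in> adj E"
proof -
  assume "(x, y) \<in> adj E"
  then have "x \<in> nbrs E y" using adj_sym nbrs_iff by blast
  then have "rot y x \<in> nbrs E y" using Rot unfolding is_rotation_def by (meson bij_betw_apply)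
  then show ?thesis using nbrs_iff by blast
qed

lemma step_simp: "step rot (x, y) = (y, rot y x)" unfolding step_def by simp

lemma step_D: "d \<in> adj E \<Longrightarrow> step rot d \<in> adj E"
  by (cases d) (simp add: step_simp rot_D)

lemma funpow_D: "d \<in> adj E \<Longrightarrow> (step rot ^^ k) d \<in> adj E"
  by (induct k) (auto simp: step_D)

lemma step_inj: "inj_on (step rot) (adj E)"
proof (rule inj_onI)
  fix a b assume a: "a \<in> adj E" and b: "b \<in> adj E" and eq: "step rot a = step rot b"
  obtain x y where xy: "a = (x, y)" by (cases a)
  obtain x' y' where xy': "b = (x', y')" by (cases b)
  have yy: "y = y'" and rr: "rot y x = rot y x'" using eq unfolding xy xy' step_simp by auto
  have "x \<in> nbrs E y" "x' \<in> nbrs E y" using a b adj_sym nbrs_iff unfolding xy xy' yy by blast+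
  moreover have "inj_on (rot y) (nbrs E y)" using Rot unfolding is_rotation_def bij_betw_def by blast
  ultimately have "x = x'" using rr by (meson inj_onD)
  then show "a = b" using xy xy' yy by simp
qed

lemma cancel: "a \<in> adj E \<Longrightarrow> b \<in> adj E \<Longrightarrow> (step rot ^^ i) a = (step rot ^^ i) b \<Longrightarrow> a = b"
proof (induct i arbitrary: a b)
  case 0 then show ?case by simp
next
  case (Suc i)
  have "(step rot ^^ i) (step rot a) = (step rot ^^ i) (step rot b)"
    using Suc.prems(3) by (simp add: funpow_Suc_right del: funpow.simps)
  then have "step rot a = step rot b" using Suc.hyps Suc.prems step_D by blast
  then show ?case using step_inj Suc.prems by (meson inj_onD)
qed

lemma period_ex: "d \<in> adj E \<Longrightarrow> \<exists>p>0. (step rot ^^ p) d = d"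
proof -
  assume d: "d \<in> adj E"
  let ?f = "\<lambda>k. (step rot ^^ k) d"
  have "\<not> inj_on ?f {0..card (adj E)}"
  proof
    assume "inj_on ?f {0..card (adj E)}"
    then have "card {0..card (adj E)} \<le> card (adj E)"
      by (rule card_inj_on_le) (use funpow_D[OF d] finD in auto)
    then show False by simp
  qed
  then obtain i j where ij: "i \<noteq> j" "?f i = ?f j" unfolding inj_on_def by blast
  have gen: "\<exists>p>0. ?f p = d" if "i < j" "?f i = ?f j" for i j
  proof -
    have "(step rot ^^ i) ((step rot ^^ (j - i)) d) = (step rot ^^ i) d"
      using that by (simp add: fpa)
    then have "(step rot ^^ (j - i)) d = d" by (rule cancel[OF funpow_D[OF d] d])
    then show ?thesis using that by (intro exI[of _ "j - i"]) auto
  qed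
  show ?thesis
  proof (cases "i < j")
    case True then show ?thesis using gen ij by blast
  next
    case False then have "j < i" using ij by simp
    then show ?thesis using gen ij by metis
  qed
qed

lemma period_mult: "(step rot ^^ p) d = d \<Longrightarrow> (step rot ^^ (p * q)) d = d"
proof (induct q)
  case 0 then show ?case by simp
next
  case (Suc q)
  have "(step rot ^^ (p * Suc q)) d = (step rot ^^ p) ((step rot ^^ (p * q)) d)"
    by (simp add: fpa add.commute)
  then show ?case using Suc by simp
qed

definition reach :: "vtx \<times> vtx \<Rightarrow> vtx \<times> vtx \<Rightarrow> bool" where
  "reach d d' \<longleftrightarrow> (\<exists>k. (step rot ^^ k) d = d')"

lemma reach_trans: "reach a b \<Longrightarrow> reach b c \<Longrightarrow> reach a c"
  unfolding reach_def by (metis comp_apply funpow_add)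

lemma reach_step: "reach a b \<Longrightarrow> reach a (step rot b)"
  unfolding reach_def by (metis funpow.simps(2) comp_apply)

lemma reach_sym: "a \<in> adj E \<Longrightarrow> reach a b \<Longrightarrow> reach b a"
proof -
  assume a: "a \<in> adj E" and "reach a b"
  then obtain k where k: "(step rot ^^ k) a = b" unfolding reach_def by blast
  obtain p where p: "p > 0" "(step rot ^^ p) a = a" using period_ex[OF a] by blast
  have "(step rot ^^ (p * k - k)) b = (step rot ^^ (p * k - k + k)) a"
    using k fpa[where f="step rot" and a="p * k - k" and b=k and x=a] by simp
  also have "p * k - k + k = p * k" using p(1) by simp
  also have "(step rot ^^ (p * k)) a = a" by (rule period_mult[OF p(2)])
  finally show ?thesis unfolding reach_def by blast
qed

end


context pt begin

definition Br :: "vtx \<Rightarrow> vtx \<Rightarrow> vtx set" where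
  "Br x y = {v. (y, v) \<in> (Gm E x y)\<^sup>*}"

lemma Gm_sub: "Gm E x y \<subseteq> vertices n m \<times> vertices n m"
  unfolding Gm_def using adj_sub_V[OF Esub] by blast

lemma Br_fin: "(x, y) \<in> adj E \<Longrightarrow> finite (Br x y)"
proof -
  assume xy: "(x, y) \<in> adj E"
  have "Br x y \<subseteq> vertices n m"
  proof
    fix v assume "v \<in> Br x y"
    then have "(y, v) \<in> (Gm E x y)\<^sup>*" unfolding Br_def by simp
    then show "v \<in> vertices n m" by (rule rtrancl_sub_V[OF _ Gm_sub]) (use DV[OF xy] in simp)
  qed
  then show ?thesis using finite_vertices by (rule finite_subset)
qed

lemma not_loop: "(x, y) \<in> adj E \<Longrightarrow> x \<noteq> y"
  unfolding adj_iff by auto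

lemma Br_psub:
  assumes xy: "(x, y) \<in> adj E" and yz: "(y, z) \<in> adj E" and zx: "z \<noteq> x"
  shows "Br y z \<subset> Br x y"
proof
  have brz: "(z, y) \<notin> (Gm E y z)\<^sup>*" by (rule bridge[OF T yz])
  have yzG: "(y, z) \<in> Gm E x y" unfolding Gm_def using yz zx not_loop[OF xy] by auto
  show "Br y z \<subseteq> Br x y"
  proof
    fix v assume "v \<in> Br y z"
    then have "(z, v) \<in> (Gm E y z)\<^sup>*" unfolding Br_def by simp
    then have "(y, v) \<in> (Gm E x y)\<^sup>*"
    proof (induct rule: rtrancl_induct)
      case base then show ?case using yzG by auto
    next
      case (step w w')
      have "(w, w') \<noteq> (x, y)"
      proof
        assume "(w, w') = (x, y)"
        then have "(z, y) \<in> (Gm E y z)\<^sup>*" using step(1,2) by auto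
        then show False using brz by simp
      qed
      moreover have "(w, w') \<noteq> (y, x)"
      proof
        assume "(w, w') = (y, x)"
        then have "(z, y) \<in> (Gm E y z)\<^sup>*" using step(1) by auto
        then show False using brz by simp
      qed
      moreover have "(w, w') \<in> adj E" using step(2) unfolding Gm_def by simp
      ultimately have "(w, w') \<in> Gm E x y" unfolding Gm_def by simp
      then show ?case using step(3) by auto
    qed
    then show "v \<in> Br x y" unfolding Br_def by simp
  qed
  have "y \<in> Br x y" unfolding Br_def by simp
  moreover have "y \<notin> Br y z" using brz unfolding Br_def by simp
  ultimately show "Br y z \<noteq> Br x y" by blast
qed

lemma excursion: "(x, y) \<in> adj E \<Longrightarrow> reach (x, y) (y, x)"
proof (induction "card (Br x y)" arbitrary: x y rule: less_induct)
  case less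
  define P where "P z \<longleftrightarrow> reach (x, y) (y, z)" for z
  have P1: "P (rot y x)" unfolding P_def reach_def by (rule exI[of _ 1]) (simp add: step_simp)
  have Pstep: "P (rot y z)" if "P z" "(y, z) \<in> adj E" "z \<noteq> x" for z
  proof -
    have "card (Br y z) < card (Br x y)"
      by (rule psubset_card_mono[OF Br_fin[OF less.prems] Br_psub[OF less.prems that(2,3)]])
    then have "reach (y, z) (z, y)" using less.hyps that(2) by blast
    then have "reach (y, z) (y, rot y z)" using reach_step step_simp by metis
    then show ?thesis using that(1) reach_trans unfolding P_def by blast
  qed
  have xn: "x \<in> nbrs E y" using less.prems adj_sym nbrs_iff by blast
  have rn: "rot y x \<in> nbrs E y" using rot_D[OF less.prems] nbrs_iff by blast
  obtain j where j: "(rot y ^^ j) (rot y x) = x"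
    using Rot xn rn unfolding is_rotation_def by blast
  have "P x \<or> (P ((rot y ^^ i) (rot y x)) \<and> (rot y ^^ i) (rot y x) \<in> nbrs E y)" for i
  proof (induct i)
    case 0 then show ?case using P1 rn by simp
  next
    case (Suc i)
    show ?case
    proof (cases "P x")
      case False
      let ?z = "(rot y ^^ i) (rot y x)"
      have z: "P ?z" "?z \<in> nbrs E y" using Suc False by auto
      show ?thesis
      proof (cases "?z = x")
        case True then show ?thesis using z by simp
      next
        case ne: False
        have "P (rot y ?z)" by (rule Pstep[OF z(1) _ ne]) (use z(2) nbrs_iff in simp)
        moreover have "rot y ?z \<in> nbrs E y"
          using rot_D z(2) nbrs_iff adj_sym by blast
        ultimately show ?thesis by simp
      qed
    qed simp
  qed
  then have "P x" using j by metis
  then show ?case unfolding P_def .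
qed

lemma all_reach:
  assumes d: "d \<in> adj E" and d': "d' \<in> adj E"
  shows "reach d d'"
proof -
  define Orb where "Orb = {d'. reach d d'}"
  have OD: "Orb \<subseteq> adj E" unfolding Orb_def reach_def using funpow_D[OF d] by blast
  have Ostep: "step rot a \<in> Orb" if "a \<in> Orb" for a using that reach_step unfolding Orb_def by blast
  have Orev: "(v, u) \<in> Orb" if "(u, v) \<in> Orb" for u v
  proof -
    have "(u, v) \<in> adj E" using that OD by blast
    then have "reach (u, v) (v, u)" by (rule excursion)
    then show ?thesis using that reach_trans unfolding Orb_def by blast
  qed
  define U where "U = {u. \<exists>v. (u, v) \<in> Orb}"
  have Uall: "(u, w) \<in> Orb" if uU: "u \<in> U" and uw: "(u, w) \<in> adj E" for u w
  proof -
    obtain v where v: "(u, v) \<in> Orb" using uU unfolding U_def by blast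
    have it: "(u, (rot u ^^ i) v) \<in> Orb" for i
    proof (induct i)
      case 0 then show ?case using v by simp
    next
      case (Suc i)
      have "((rot u ^^ i) v, u) \<in> Orb" by (rule Orev[OF Suc])
      from Ostep[OF this] show ?case by (simp add: step_simp)
    qed
    have "v \<in> nbrs E u" "w \<in> nbrs E u" using v OD uw nbrs_iff by blast+
    then obtain j where "(rot u ^^ j) v = w" using Rot unfolding is_rotation_def by blast
    then show ?thesis using it by blast
  qed
  have Unext: "w \<in> U" if "u \<in> U" "(u, w) \<in> adj E" for u w
    using Orev[OF Uall[OF that]] unfolding U_def by blast
  obtain r e where re: "d = (r, e)" by (cases d)
  have rU: "r \<in> U" using re unfolding U_def Orb_def reach_def by (auto intro!: exI[of _ 0])
  have rV: "r \<in> vertices n m" using DV d re by simp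
  have VU: "u \<in> U" if "u \<in> vertices n m" for u
  proof -
    have "(r, u) \<in> (adj E)\<^sup>*" by (rule conn[OF rV that])
    then show ?thesis
      by (induct rule: rtrancl_induct) (use rU Unext in auto)
  qed
  obtain u w where uw: "d' = (u, w)" by (cases d')
  have "u \<in> U" using VU DV d' uw by simp
  then have "d' \<in> Orb" using Uall d' uw by simp
  then show ?thesis unfolding Orb_def by simp
qed

lemma orbit:
  assumes d: "d \<in> adj E"
  shows "(step rot ^^ card (adj E)) d = d" and "inj_on (\<lambda>k. (step rot ^^ k) d) {..<card (adj E)}"
    and "(\<lambda>k. (step rot ^^ k) d) ` {..<card (adj E)} = adj E"
proof -
  define p where "p = (LEAST p. 0 < p \<and> (step rot ^^ p) d = d)"
  have p: "0 < p \<and> (step rot ^^ p) d = d" unfolding p_def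
    by (rule LeastI_ex) (use period_ex[OF d] in blast)
  have inj: "inj_on (\<lambda>k. (step rot ^^ k) d) {..<p}"
  proof (rule inj_onI, rule ccontr)
    have gen: False if ij: "i < j" "j < p" "(step rot ^^ i) d = (step rot ^^ j) d" for i j
    proof -
      have "(step rot ^^ i) ((step rot ^^ (j - i)) d) = (step rot ^^ i) d"
        using ij fpa[where f="step rot" and a=i and b="j - i" and x=d] by simp
      then have "(step rot ^^ (j - i)) d = d" by (rule cancel[OF funpow_D[OF d] d])
      moreover have "j - i < p" "0 < j - i" using ij by auto
      ultimately show False using not_less_Least p_def by blast
    qed
    fix i j assume "i \<in> {..<p}" "j \<in> {..<p}" "(step rot ^^ i) d = (step rot ^^ j) d" "i \<noteq> j"
    then show False using gen[of i j] gen[of j i] by (cases "i < j") auto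
  qed
  have img: "(\<lambda>k. (step rot ^^ k) d) ` {..<p} = adj E"
  proof
    show "(\<lambda>k. (step rot ^^ k) d) ` {..<p} \<subseteq> adj E" using funpow_D[OF d] by blast
    show "adj E \<subseteq> (\<lambda>k. (step rot ^^ k) d) ` {..<p}"
    proof
      fix d' assume "d' \<in> adj E"
      then obtain k where k: "(step rot ^^ k) d = d'" using all_reach[OF d] unfolding reach_def by blast
      have "(step rot ^^ (k mod p)) d = (step rot ^^ (k mod p)) ((step rot ^^ (p * (k div p))) d)"
        using period_mult[of p d "k div p"] p by simp
      also have "\<dots> = (step rot ^^ k) d" by (simp add: fpa)
      finally have "(step rot ^^ (k mod p)) d = d'" using k by simp
      moreover have "k mod p < p" using p by simp
      ultimately show "d' \<in> (\<lambda>k. (step rot ^^ k) d) ` {..<p}" by blast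
    qed
  qed
  have cp: "card (adj E) = p" using card_image[OF inj] img by simp
  show "(step rot ^^ card (adj E)) d = d" "inj_on (\<lambda>k. (step rot ^^ k) d) {..<card (adj E)}"
    "(\<lambda>k. (step rot ^^ k) d) ` {..<card (adj E)} = adj E" using p inj img unfolding cp by auto
qed

end


context pt begin

lemma cardD: "card (adj E) = 2 * (n + m - 1)"
proof -
  have "finite E" using Esub by (rule finite_subset) simp
  then have "card (adj E) = 2 * card E" by (rule card_adj)
  moreover have "card E + 1 = n + m" using T unfolding is_tree_def by simp
  ultimately show ?thesis by simp
qed

lemma walk_facts:
  assumes d: "(r, e) \<in> adj E"
  defines "x \<equiv> occ rot r e" and "L \<equiv> 2 * (n + m - 1)"
  shows "\<exists>p. x L = x 0 \<and> x (Suc L) = x 1 \<and> Suc (Suc p) \<le> L \<and> x (Suc (Suc p)) = x 0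
     \<and> (\<forall>t. 0 < t \<longrightarrow> t < Suc (Suc p) \<longrightarrow> x t \<noteq> x 0) \<and> x (Suc p) = x 1
     \<and> (\<forall>s t. 1 \<le> s \<longrightarrow> s < Suc (Suc p) \<longrightarrow> Suc (Suc p) \<le> t \<longrightarrow> t \<le> L \<longrightarrow> x s \<noteq> x t)
     \<and> card (x ` {0..<Suc L}) = n + m"
proof -
  define dd where "dd = (r, e)"
  define dt where "dt t = (step rot ^^ t) dd" for t
  have LD: "L = card (adj E)" unfolding L_def cardD ..
  have per: "dt L = dd" unfolding dt_def LD using orbit(1) d dd_def by simp
  have inj: "inj_on dt {..<L}" unfolding dt_def LD using orbit(2) d dd_def by simp
  have img: "dt ` {..<L} = adj E" unfolding dt_def LD using orbit(3) d dd_def by simp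
  have dtD: "dt t \<in> adj E" for t unfolding dt_def using funpow_D d dd_def by simp
  have xdt: "x t = fst (dt t)" for t unfolding x_def occ_def dt_def dd_def by simp
  have dtS: "dt (Suc t) = step rot (dt t)" for t unfolding dt_def by simp
  have dtx: "dt t = (x t, x (Suc t))" for t
    unfolding xdt dtS by (cases "dt t") (simp add: step_simp)
  have re: "r \<noteq> e" using not_loop[OF d] .
  have er: "(e, r) \<in> adj E" using adj_sym[OF d] .
  obtain k1 where k1: "dt k1 = (e, r)" using excursion[OF d] unfolding reach_def dt_def dd_def by blast
  define k0 where "k0 = (LEAST k. dt k = (e, r))"
  have k0: "dt k0 = (e, r)" unfolding k0_def using k1 by (rule LeastI)
  have k0min: "dt t \<noteq> (e, r)" if "t < k0" for t using that not_less_Least k0_def by blast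
  obtain k2 where k2: "k2 < L" "dt k2 = (e, r)" using img er by (metis imageE lessThan_iff)
  have k0L: "k0 < L" using Least_le[of "\<lambda>k. dt k = (e, r)" k2] k2 unfolding k0_def by simp
  have dt0: "dt 0 = (r, e)" unfolding dt_def dd_def by simp
  have k00: "k0 \<noteq> 0"
  proof
    assume "k0 = 0"
    then have "dt 0 = (e, r)" using k0 by simp
    then show False using re dt0 by simp
  qed
  define p where "p = k0 - 1"
  have kp: "Suc p = k0" using k00 p_def by simp
  have x0: "x 0 = r" using xdt[of 0] dt0 by simp
  have x1: "x 1 = e" using dtx[of 0] dt0 by simp
  have xk0: "x k0 = e" "x (Suc k0) = r" using dtx[of k0] k0 by auto
  have xL: "x L = x 0" using xdt per dd_def x0 by simp
  have xSL: "x (Suc L) = x 1" using dtx[of L] per dd_def x1 by simp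
  have ne_d: "dt t \<noteq> dd" if "0 < t" "t < L" for t
  proof
    assume "dt t = dd"
    moreover have "dt 0 = dd" unfolding dt_def by simp
    ultimately have "t = 0" using inj that by (metis inj_onD lessThan_iff less_trans)
    then show False using that by simp
  qed
  have ne_er: "dt t \<noteq> (e, r)" if "t \<noteq> k0" "t < L" for t
    using that inj k0 k0L by (metis inj_onD lessThan_iff)
  have Gstep: "(x t, x (Suc t)) \<in> Gm E r e" if "0 < t" "t < L" "t \<noteq> k0" for t
    using ne_d[OF that(1,2)] ne_er[OF that(3,2)] dtD[of t] unfolding dtx dd_def Gm_def by auto
  have inBr: "1 \<le> t \<longrightarrow> t \<le> k0 \<longrightarrow> x t \<in> Br r e" for t
  proof (induct t)
    case 0 then show ?case by simp
  next
    case (Suc t)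
    show ?case
    proof (cases t)
      case 0 then show ?thesis using x1 unfolding Br_def by simp
    next
      case (Suc t')
      show ?thesis
      proof (intro impI)
        assume "Suc t \<le> k0"
        then have "x t \<in> Br r e" "(x t, x (Suc t)) \<in> Gm E r e"
          using Suc.hyps \<open>t = Suc t'\<close> Gstep[of t] k0L by auto
        then show "x (Suc t) \<in> Br r e" unfolding Br_def by auto
      qed
    qed
  qed
  have rBr: "r \<notin> Br r e" using bridge[OF T d] unfolding Br_def by simp
  have outBr: "Suc k0 \<le> t \<longrightarrow> t \<le> L \<longrightarrow> x t \<notin> Br r e" for t
  proof (induct t)
    case 0 then show ?case by simp
  next
    case (Suc t)
    show ?case
    proof (intro impI)
      assume a: "Suc k0 \<le> Suc t" "Suc t \<le> L"
      show "x (Suc t) \<notin> Br r e"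
      proof (cases "Suc k0 = Suc t")
        case True then show ?thesis using xk0 rBr by simp
      next
        case False
        then have t: "Suc k0 \<le> t" "t < L" using a by auto
        then have nb: "x t \<notin> Br r e" using Suc.hyps by simp
        have "(x (Suc t), x t) \<in> Gm E r e" using Gstep[of t] t by (auto intro: Gm_sym)
        then show ?thesis using nb unfolding Br_def by (meson mem_Collect_eq rtrancl.rtrancl_into_rtrancl)
      qed
    qed
  qed
  have H2c: "\<forall>t. 0 < t \<longrightarrow> t < Suc (Suc p) \<longrightarrow> x t \<noteq> x 0"
  proof (intro allI impI)
    fix t assume "0 < t" "t < Suc (Suc p)"
    then have "x t \<in> Br r e" using inBr[of t] kp by simp
    then show "x t \<noteq> x 0" using rBr x0 by auto
  qed
  have H4: "\<forall>s t. 1 \<le> s \<longrightarrow> s < Suc (Suc p) \<longrightarrow> Suc (Suc p) \<le> t \<longrightarrow> t \<le> L \<longrightarrow> x s \<noteq> x t"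
  proof (intro allI impI)
    fix s t assume "1 \<le> s" "s < Suc (Suc p)" "Suc (Suc p) \<le> t" "t \<le> L"
    then have "x s \<in> Br r e" "x t \<notin> Br r e" using inBr[of s] outBr[of t] kp by auto
    then show "x s \<noteq> x t" by auto
  qed
  have imgV: "x ` {0..<Suc L} = vertices n m"
  proof
    show "x ` {0..<Suc L} \<subseteq> vertices n m" using dtD DV unfolding xdt by (metis image_subsetI prod.collapse)
    show "vertices n m \<subseteq> x ` {0..<Suc L}"
    proof
      fix v assume v: "v \<in> vertices n m"
      have rV: "r \<in> vertices n m" and eV: "e \<in> vertices n m" using DV[OF d] by auto
      obtain w where w: "w \<in> vertices n m" "w \<noteq> v" using rV eV re by blast
      have "(v, w) \<in> (adj E)\<^sup>*" by (rule conn[OF v w(1)])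
      then obtain u where "(v, u) \<in> adj E" using w(2) by (metis converse_rtranclE)
      then obtain k where "k < L" "dt k = (v, u)" using img by (metis imageE lessThan_iff)
      then have "x k = v" "k \<in> {0..<Suc L}" using xdt[of k] by auto
      then show "v \<in> x ` {0..<Suc L}" by (metis image_eqI)
    qed
  qed
  have cV: "card (x ` {0..<Suc L}) = n + m" unfolding imgV card_vertices ..
  show ?thesis
    apply (rule exI[of _ p])
    using xL xSL k0L kp xk0 x0 x1 H2c H4 cV by auto
qed

definition iTd :: "vtx \<times> vtx \<Rightarrow> nat" where "iTd d = iT n m rot (fst d) (snd d)"

lemma one_shift:
  assumes d: "d \<in> adj E" and ev: "even (n + m)"
  shows "iTd (step rot d) = (iTd d + (n + m) div 2) mod 2"
proof -
  obtain r e where re: "d = (r, e)" by (cases d)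
  define x where "x = occ rot r e"
  define L where "L = 2 * (n + m - 1)"
  obtain p where H: "x L = x 0" "x (Suc L) = x 1" "Suc (Suc p) \<le> L" "x (Suc (Suc p)) = x 0"
     "\<And>t. 0 < t \<Longrightarrow> t < Suc (Suc p) \<Longrightarrow> x t \<noteq> x 0" "x (Suc p) = x 1"
     "\<And>s t. 1 \<le> s \<Longrightarrow> s < Suc (Suc p) \<Longrightarrow> Suc (Suc p) \<le> t \<Longrightarrow> t \<le> L \<Longrightarrow> x s \<noteq> x t"
     "card (x ` {0..<Suc L}) = n + m"
    using walk_facts[of r e] d re unfolding x_def L_def by blast
  obtain A0 Bs where AB: "tokS x L = Lab (x 0) # A0 @ Close # Bs @ [Close]"
     "tokS (\<lambda>t. x (Suc t)) L = A0 @ Lab (x 0) # Bs @ [Close, Close]"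
     "Lab (x 0) \<notin> set A0" "nl A0 = nc A0 + 1" "1 + nl A0 + nl Bs = card (x ` {0..<Suc L})"
    using decomp[of x L p, OF H(1,2,3,4) _ H(6)] H(5,7) by blast
  have occS: "occ rot (fst (step rot d)) (snd (step rot d)) = (\<lambda>t. x (Suc t))"
    unfolding x_def occ_def re by (simp add: funpow_Suc_right del: funpow.simps)
  have c1: "cstring n m rot r e = tokS x L" unfolding cstring_tokS x_def L_def ..
  have c2: "cstring n m rot (fst (step rot d)) (snd (step rot d)) = tokS (\<lambda>t. x (Suc t)) L"
    unfolding cstring_tokS occS L_def ..
  define e0 where "e0 = (if n \<ge> m then n - m else m - n) div 2"
  have Q: "(inv_a (tokS (\<lambda>t. x (Suc t)) L) + inv_b (tokS (\<lambda>t. x (Suc t)) L) + inv_c (tokS (\<lambda>t. x (Suc t)) L)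
        + (inv_d (tokS (\<lambda>t. x (Suc t)) L) + e0) div 2) mod 2
     = (inv_a (tokS x L) + inv_b (tokS x L) + inv_c (tokS x L) + (inv_d (tokS x L) + e0) div 2 + (n + m) div 2) mod 2"
    by (rule Q_shift[OF AB(1,2,3,4)]) (use AB(5) H(8) ev in auto)
  have i1: "iTd (step rot d) = (inv_a (tokS (\<lambda>t. x (Suc t)) L) + inv_b (tokS (\<lambda>t. x (Suc t)) L) + inv_c (tokS (\<lambda>t. x (Suc t)) L)
        + (inv_d (tokS (\<lambda>t. x (Suc t)) L) + e0) div 2) mod 2"
    unfolding iTd_def iT_def Let_def c2 e0_def by (rule refl)
  have i2: "iTd d = (inv_a (tokS x L) + inv_b (tokS x L) + inv_c (tokS x L) + (inv_d (tokS x L) + e0) div 2) mod 2"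
    unfolding iTd_def iT_def Let_def re fst_conv snd_conv c1 e0_def by (rule refl)
  show ?thesis unfolding i1 i2 Q by (simp add: mod_add_left_eq)
qed

lemma iTd_lt: "iTd d < 2" unfolding iTd_def iT_def Let_def by simp

lemma two_shift:
  assumes d: "d \<in> adj E" and ev: "even (n + m)"
  shows "iTd ((step rot ^^ (2 * j)) d) = iTd d"
proof (induct j)
  case 0 then show ?case by simp
next
  case (Suc j)
  let ?d = "(step rot ^^ (2 * j)) d"
  have dD: "?d \<in> adj E" using funpow_D d by blast
  have e: "(step rot ^^ (2 * Suc j)) d = step rot (step rot ?d)" by simp
  have "iTd (step rot (step rot ?d)) = ((iTd ?d + (n + m) div 2) mod 2 + (n + m) div 2) mod 2"
    using one_shift[OF step_D[OF dD] ev] one_shift[OF dD ev] by simp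
  also have "\<dots> = iTd ?d"
    using iTd_lt[of ?d] by (simp add: mod_add_left_eq) presburger
  finally show ?case using e Suc by simp
qed

fun isW :: "vtx \<Rightarrow> bool" where "isW (W _) = True" | "isW (B _) = False"

lemma color: "d \<in> adj E \<Longrightarrow> isW (fst ((step rot ^^ k) d)) = (if even k then isW (fst d) else \<not> isW (fst d))"
proof (induct k)
  case 0 then show ?case by simp
next
  case (Suc k)
  obtain a b where ab: "(step rot ^^ k) d = (a, b)" by (cases "(step rot ^^ k) d")
  have "(a, b) \<in> adj E" using funpow_D[OF Suc.prems] ab by metis
  then have "isW b = (\<not> isW a)" unfolding adj_iff by auto
  then show ?case using Suc ab by (simp add: step_simp)
qed

end


theorem mainTheorem3:
  fixes n m :: nat and E :: "(nat \<times> nat) set" and rot :: "vtx \<Rightarrow> vtx \<Rightarrow> vtx"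
    and i i' :: nat and e e' :: vtx
  assumes "plane_tree n m E rot"
    and "even (n + m)"
    and "i \<in> {1..n}" and "e \<in> nbrs E (W i)"
    and "i' \<in> {1..n}" and "e' \<in> nbrs E (W i')"
  shows "iT n m rot (W i) e = iT n m rot (W i') e'"
proof -
  interpret pt n m E rot by standard (rule assms(1))
  have d1: "(W i, e) \<in> adj E" using assms(4) nbrs_iff by blast
  have d2: "(W i', e') \<in> adj E" using assms(6) nbrs_iff by blast
  obtain k where k: "(step rot ^^ k) (W i, e) = (W i', e')"
    using all_reach[OF d1 d2] unfolding reach_def by blast
  have "isW (fst ((step rot ^^ k) (W i, e))) = (if even k then True else False)"
    using color[OF d1, of k] by simp
  then have "even k" using k by (simp split: if_splits)
  then obtain j where j: "k = 2 * j" by blast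
  have "iTd (W i', e') = iTd (W i, e)" using two_shift[OF d1 assms(2), of j] k j by simp
  then show ?thesis unfolding iTd_def by simp
qed


end
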